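(* Let $\Phi_{\mathbf 0}(\xi,w,z)$ and $\Phi(\xi,w)=\int_\xi^\infty\int_{-1}^1\Phi_{\mathbf 0}(\eta,w,z)\,dz\,d\eta$ be as defined in the context, and put $u=\xi(1-|w|)$. Then, as $\xi\to\infty$, uniformly in $w\in(-1,1)$, \[ \Phi(\xi,w)=\frac{3}{2\pi^2}(1-u)^2\xi^{-1}+O(\xi^{-2})\quad\text{if } u\in[0,1), \] and $\Phi(\xi,w)=0$ otherwise.
   Context: For $\xi>0$ and $w,z\in(-1,1)$, $\Phi_{\mathbf 0}(\xi,w,z)=\frac{6}{\pi^2}\Upsilon\Bigl(1+\frac{\xi^{-1}-\max(|w|,|z|)-1}{|w+z|}\Bigr)$ if $w+z\neq0$; $\Phi_{\mathbf 0}(\xi,w,z)=0$ if $w+z=0$ and $\xi^{-1}<1+|w|$; $\Phi_{\mathbf 0}(\xi,w,z)=\frac{6}{\pi^2}$ if $w+z=0$ and $\xi^{-1}\ge1+|w|$. Here $\Upsilon(x)=0$ for $x\le0$, $\Upsilon(x)=x$ for $0<x<1$, $\Upsilon(x)=1$ for $x\ge1$. *)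

theory Defs
  imports "HOL-Analysis.Analysis"
begin

definition Upsilon :: "real \<Rightarrow> real" where
  "Upsilon x = (if x \<le> 0 then 0 else if x < 1 then x else 1)"

definition Phi0 :: "real \<Rightarrow> real \<Rightarrow> real \<Rightarrow> real" where
  "Phi0 \<xi> w z =
     (if w + z \<noteq> 0 then 6 / pi^2 * Upsilon (1 + (1/\<xi> - max \<bar>w\<bar> \<bar>z\<bar> - 1) / \<bar>w + z\<bar>)
      else if 1/\<xi> < 1 + \<bar>w\<bar> then 0 else 6 / pi^2)"

definition Phi :: "real \<Rightarrow> real \<Rightarrow> real" where
  "Phi \<xi> w = integral {\<xi>..} (\<lambda>\<eta>. integral {-1<..<1} (\<lambda>z. Phi0 \<eta> w z))"

end

theory Submission
  imports Defs "HOL-Analysis.Equivalence_Measurable_On_Borel"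
begin

definition NN :: "real \<Rightarrow> real \<Rightarrow> real \<Rightarrow> real" where
  "NN e d z = max 0 (e - max d (1 - z))"

definition FF :: "real \<Rightarrow> real \<Rightarrow> real \<Rightarrow> real" where
  "FF e d z = NN e d z / (1 - d + max z (1/2))"

lemma ftc_real:
  fixes a b :: real
  assumes "a \<le> b" "\<And>x. x \<in> {a..b} \<Longrightarrow> (G has_real_derivative g x) (at x)"
  shows "(g has_integral (G b - G a)) {a..b}"
  by (intro fundamental_theorem_of_calculus[OF assms(1)])
     (metis assms(2) has_real_derivative_iff_has_vector_derivative has_vector_derivative_at_within)

lemma phi0_sym: "Phi0 \<eta> w z = Phi0 \<eta> (-w) (-z)"
proof -
  have "\<bar>- w + - z\<bar> = \<bar>w + z\<bar>" by linarith
  moreover have "(-w + -z \<noteq> 0) = (w + z \<noteq> 0)" by linarith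
  ultimately show ?thesis unfolding Phi0_def by simp
qed

lemma phi0_eq:
  assumes "\<eta> \<ge> 2" "0 \<le> w" "w < 1"
  shows "Phi0 \<eta> w z = 6/pi^2 * FF (1/\<eta>) (1-w) z"
proof -
  define e where "e = 1/\<eta>"
  have e0: "0 < e" and e1: "e \<le> 1/2" using assms(1) by (auto simp: e_def field_simps)
  show ?thesis
  proof (cases "w + z = 0")
    case True
    have "1/\<eta> < 1 + \<bar>w\<bar>" using e1 e_def by auto
    moreover have "NN e (1-w) z = 0" using True assms e1 unfolding NN_def by auto
    ultimately show ?thesis using True unfolding Phi0_def FF_def e_def by simp
  next
    case False
    note F = False
    show ?thesis
    proof (cases "z \<ge> 0")
      case True
      define D where "D = w + z"
      have D0: "D > 0" using True False assms D_def by auto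
      have ab: "\<bar>w + z\<bar> = D" using D0 D_def by simp
      have A1: "1 + (e - max \<bar>w\<bar> \<bar>z\<bar> - 1) / D = (D + (e - max \<bar>w\<bar> \<bar>z\<bar> - 1)) / D"
        using D0 by (simp add: field_simps)
      have A2: "D + (e - max \<bar>w\<bar> \<bar>z\<bar> - 1) = e - max (1-w) (1-z)"
        using True assms D_def by (auto simp: max_def)
      have A: "1 + (1/\<eta> - max \<bar>w\<bar> \<bar>z\<bar> - 1) / \<bar>w + z\<bar> = (e - max (1-w) (1-z)) / D"
        using A1 A2 ab e_def by simp
      show ?thesis
      proof (cases "e - max (1-w) (1-z) \<le> 0")
        case True
        have "(e - max (1-w) (1-z)) / D \<le> 0" using True D0 by (simp add: divide_le_0_iff)
        then show ?thesis using F True A unfolding Phi0_def Upsilon_def FF_def NN_def e_def by simp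
      next
        case False
        have z2: "z > 1/2" using False e1 by auto
        have lt: "(e - max (1-w) (1-z)) / D < 1" using False z2 assms e1 D0 D_def
          by (simp add: divide_less_eq)
        have pos: "\<not> (e - max (1-w) (1-z)) / D \<le> 0" using False D0 by (simp add: divide_le_0_iff)
        have U: "Upsilon (1 + (1/\<eta> - max \<bar>w\<bar> \<bar>z\<bar> - 1) / \<bar>w + z\<bar>) = (e - max (1-w) (1-z)) / D"
          unfolding A Upsilon_def using lt pos by simp
        have "max 0 (e - max (1-w) (1-z)) = e - max (1-w) (1-z)" using False by simp
        moreover have "max z (1/2) = z" using z2 by simp
        ultimately have "FF e (1-w) z = (e - max (1-w) (1-z)) / D" unfolding FF_def NN_def D_def by simp
        then show ?thesis using F U unfolding Phi0_def e_def by simp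
      qed
    next
      case False
      have le: "\<bar>w + z\<bar> \<le> max \<bar>w\<bar> \<bar>z\<bar>" using False assms by auto
      have Dp: "\<bar>w + z\<bar> > 0" using F by simp
      have "(1/\<eta> - max \<bar>w\<bar> \<bar>z\<bar> - 1) / \<bar>w + z\<bar> \<le> -1"
      proof -
        have "1/\<eta> - max \<bar>w\<bar> \<bar>z\<bar> - 1 \<le> - \<bar>w + z\<bar>" using le e1 e_def by linarith
        then show ?thesis using Dp by (simp add: divide_le_eq)
      qed
      then have "1 + (1/\<eta> - max \<bar>w\<bar> \<bar>z\<bar> - 1) / \<bar>w + z\<bar> \<le> 0" by simp
      moreover have "NN e (1-w) z = 0" using False e1 unfolding NN_def by auto
      ultimately show ?thesis using F unfolding Phi0_def Upsilon_def FF_def e_def by simp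
    qed
  qed
qed

lemma NN_int:
  assumes d: "0 < d" "d \<le> 1" and e: "0 < e" "e \<le> 1/2"
  shows "(NN e d has_integral (max 0 (e^2 - d^2) / 2)) {-1..1}"
proof (cases "e \<le> d")
  case True
  have z: "\<And>z. NN e d z = 0" using True unfolding NN_def by auto
  have "e^2 \<le> d^2" using True e by (simp add: power_mono)
  then have "max 0 (e^2 - d^2) / 2 = 0" by simp
  moreover have "NN e d = (\<lambda>_. 0)" using z by auto
  ultimately show ?thesis by simp
next
  case False
  have p1: "(NN e d has_integral 0) {-1..1-e}"
  proof -
    have "(NN e d has_integral 0) {-1..1-e} \<longleftrightarrow> ((\<lambda>_. 0::real) has_integral 0) {-1..1-e}"
      by (rule has_integral_cong) (auto simp: NN_def)
    then show ?thesis by simp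
  qed
  have p2: "(NN e d has_integral ((e-d)^2/2)) {1-e..1-d}"
  proof -
    have "(NN e d has_integral ((e-d)^2/2)) {1-e..1-d} \<longleftrightarrow> ((\<lambda>z. e - 1 + z) has_integral ((e-d)^2/2)) {1-e..1-d}"
      by (rule has_integral_cong) (auto simp: NN_def)
    moreover have "((\<lambda>z. e - 1 + z) has_integral ((\<lambda>z. (e - 1 + z)^2/2) (1-d) - (\<lambda>z. (e - 1 + z)^2/2) (1-e))) {1-e..1-d}"
      using False by (intro ftc_real) (auto intro!: derivative_eq_intros)
    moreover have "(\<lambda>z. (e - 1 + z)^2/2) (1-d) - (\<lambda>z. (e - 1 + z)^2/2) (1-e) = (e-d)^2/2" by simp
    ultimately show ?thesis by simp
  qed
  have p3: "(NN e d has_integral ((e-d)*d)) {1-d..1}"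
  proof -
    have "(NN e d has_integral ((e-d)*d)) {1-d..1} \<longleftrightarrow> ((\<lambda>z. e - d) has_integral ((e-d)*d)) {1-d..1}"
      by (rule has_integral_cong) (use False in \<open>auto simp: NN_def\<close>)
    moreover have "((\<lambda>z. e - d) has_integral ((\<lambda>z. (e-d)*z) 1 - (\<lambda>z. (e-d)*z) (1-d))) {1-d..1}"
      using d by (intro ftc_real) (auto intro!: derivative_eq_intros)
    moreover have "(\<lambda>z. (e-d)*z) 1 - (\<lambda>z. (e-d)*z) (1-d) = (e-d)*d" by (simp add: algebra_simps)
    ultimately show ?thesis by simp
  qed
  have p12: "(NN e d has_integral (0 + (e-d)^2/2)) {-1..1-d}"
    by (rule has_integral_combine[OF _ _ p1 p2]) (use False e in auto)
  have hI: "(NN e d has_integral ((0 + (e-d)^2/2) + (e-d)*d)) {-1..1}"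
    by (rule has_integral_combine[OF _ _ p12 p3]) (use d in auto)
  have eqv: "(0 + (e-d)^2/2) + (e-d)*d = max 0 (e^2 - d^2) / 2"
  proof -
    have "d^2 \<le> e^2" using False d by (simp add: power_mono)
    then have "max 0 (e^2 - d^2) = e^2 - d^2" by simp
    moreover have "(0 + (e-d)^2/2) + (e-d)*d = (e^2 - d^2)/2" by (simp add: power2_eq_square field_simps)
    ultimately show ?thesis by simp
  qed
  show ?thesis using hI unfolding eqv .
qed

lemma FF_cont:
  assumes "d \<le> 1"
  shows "continuous_on {-1..1} (FF e d)"
proof -
  have "\<And>z. 1 - d + max z (1/2) \<noteq> 0"
  proof -
    fix z :: real have "max z (1/2) \<ge> 1/2" by simp
    then show "1 - d + max z (1/2) \<noteq> 0" using assms by linarith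
  qed
  then show ?thesis unfolding FF_def NN_def
    by (intro continuous_intros) auto
qed

lemma FF_int: "d \<le> 1 \<Longrightarrow> FF e d integrable_on {-1..1}"
  by (rule integrable_continuous_interval[OF FF_cont])

lemma FF_bounds:
  assumes d: "0 < d" "d \<le> 1" and e: "0 < e" "e \<le> 1/2" and zz: "z \<le> 1"
  shows "NN e d z * (1/2) \<le> FF e d z \<and> FF e d z \<le> NN e d z * ((1 + 2*e)/2)"
proof (cases "NN e d z = 0")
  case True
  then show ?thesis unfolding FF_def by simp
next
  case False
  then have pos: "NN e d z > 0" and Nv: "NN e d z = e - max d (1-z)" unfolding NN_def by auto
  then have z: "1 - z < e" "d < e" by auto
  define D where "D = 1 - d + max z (1/2)"
  have Dz: "D = 1 - d + z" using z e D_def by auto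
  have D1: "D \<le> 2" "D > 2 - 2*e" using Dz z d zz by auto
  have "FF e d z = NN e d z / D" unfolding FF_def D_def by simp
  moreover have "NN e d z * (1/2) \<le> NN e d z / D"
  proof -
    have "NN e d z / 2 \<le> NN e d z / D"
      by (rule divide_left_mono) (use D1 pos e in auto)
    then show ?thesis by simp
  qed
  moreover have "NN e d z / D \<le> NN e d z * ((1 + 2*e)/2)"
  proof -
    have "(2 - 2*e) * (1 + 2*e) \<ge> 2" using e by (simp add: algebra_simps)
    then have "D * (1 + 2*e) \<ge> 2" using D1 e
      by (smt (verit) mult_right_mono)
    then have "NN e d z * 2 \<le> NN e d z * (D * (1 + 2*e))" using pos by simp
    then show ?thesis using D1 e by (simp add: field_simps)
  qed
  ultimately show ?thesis by simp
qed

definition IF :: "real \<Rightarrow> real \<Rightarrow> real" where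
  "IF e d = integral {-1..1} (FF e d)"

lemma IF_bounds:
  assumes d: "0 < d" "d \<le> 1" and e: "0 < e" "e \<le> 1/2"
  shows "max 0 (e^2 - d^2) / 4 \<le> IF e d \<and> IF e d \<le> max 0 (e^2 - d^2) / 4 + e^3/2"
proof -
  define M where "M = max 0 (e^2 - d^2) / 2"
  have hN: "(NN e d has_integral M) {-1..1}" using NN_int[OF d e] unfolding M_def .
  have hF: "(FF e d has_integral IF e d) {-1..1}" unfolding IF_def using FF_int d by auto
  have l: "M * (1/2) \<le> IF e d"
    by (rule has_integral_le[OF has_integral_mult_left[OF hN] hF]) (use FF_bounds[OF d e] in auto)
  have u: "IF e d \<le> M * ((1 + 2*e)/2)"
    by (rule has_integral_le[OF hF has_integral_mult_left[OF hN]]) (use FF_bounds[OF d e] in auto)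
  have M0: "0 \<le> M" "M \<le> e^2/2" using d unfolding M_def by auto
  have "M * ((1 + 2*e)/2) = M/2 + e * M" by (simp add: algebra_simps)
  also have "e * M \<le> e * (e^2/2)" using M0 e by (simp add: mult_left_mono)
  finally have "M * ((1 + 2*e)/2) \<le> M/2 + e^3/2" by (simp add: power3_eq_cube power2_eq_square)
  then have u2: "IF e d \<le> M/2 + e^3/2" using u by linarith
  have "M/2 = max 0 (e^2 - d^2) / 4" "M * (1/2) = max 0 (e^2 - d^2) / 4" by (simp_all add: M_def)
  then show ?thesis using l u2 by linarith
qed

lemma IF_mono:
  assumes "e1 \<le> e2" "d \<le> 1"
  shows "IF e1 d \<le> IF e2 d"
  unfolding IF_def
proof (rule integral_le[OF FF_int FF_int])
  fix z assume "z \<in> {-1..(1::real)}"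
  have "max z (1/2) \<ge> 1/2" by simp
  then have D: "1 - d + max z (1/2) > 0" using assms by linarith
  have "NN e1 d z \<le> NN e2 d z" unfolding NN_def using assms by auto
  then show "FF e1 d z \<le> FF e2 d z" unfolding FF_def using D by (simp add: divide_right_mono)
qed (use assms in auto)

lemma inner_eq:
  assumes "\<eta> \<ge> 2" "-1 < w" "w < 1"
  shows "integral {-1<..<1} (\<lambda>z. Phi0 \<eta> w z) = 6/pi^2 * IF (1/\<eta>) (1 - \<bar>w\<bar>)"
proof -
  have "integral {-1<..<1} (\<lambda>z. Phi0 \<eta> w z) = integral {-1..1} (\<lambda>z. Phi0 \<eta> w z)"
    by (simp add: integral_open_interval_real)
  also have "\<dots> = 6/pi^2 * IF (1/\<eta>) (1 - \<bar>w\<bar>)"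
  proof (cases "w \<ge> 0")
    case True
    have "integral {-1..1} (\<lambda>z. Phi0 \<eta> w z) = integral {-1..1} (\<lambda>z. 6/pi^2 * FF (1/\<eta>) (1-w) z)"
      by (rule integral_cong) (use phi0_eq[OF assms(1) True assms(3)] in auto)
    then show ?thesis using True unfolding IF_def by simp
  next
    case False
    have "integral {-1..1} (\<lambda>z. Phi0 \<eta> w z) = integral {-1..1} (\<lambda>z. 6/pi^2 * FF (1/\<eta>) (1-(-w)) (-z))"
      by (rule integral_cong) (use phi0_eq[OF assms(1), of "-w"] False assms in \<open>auto simp: phi0_sym[of \<eta> w]\<close>)
    also have "\<dots> = 6/pi^2 * integral {-1..1} (\<lambda>z. FF (1/\<eta>) (1-(-w)) (-z))" by simp
    also have "integral {-1..1} (\<lambda>z. FF (1/\<eta>) (1-(-w)) (-z)) = integral {-1..1} (FF (1/\<eta>) (1-(-w)))"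
      using Henstock_Kurzweil_Integration.integral_reflect_real[of 1 "-1" "FF (1/\<eta>) (1-(-w))"] by (simp only: minus_minus)
    finally show ?thesis using False unfolding IF_def by simp
  qed
  finally show ?thesis .
qed

lemma IF_zero:
  assumes "e \<le> d"
  shows "IF e d = 0"
proof -
  have "FF e d = (\<lambda>_. 0)" using assms by (auto simp: FF_def NN_def fun_eq_iff)
  then show ?thesis unfolding IF_def by simp
qed

lemma g_bounds:
  assumes "\<eta> \<ge> 2" "-1 < w" "w < 1"
  shows "3/(2*pi^2) * max 0 (1/\<eta>^2 - (1-\<bar>w\<bar>)^2) \<le> integral {-1<..<1} (\<lambda>z. Phi0 \<eta> w z) \<and>
         integral {-1<..<1} (\<lambda>z. Phi0 \<eta> w z) \<le> 3/(2*pi^2) * max 0 (1/\<eta>^2 - (1-\<bar>w\<bar>)^2) + 3/pi^2 * (1/\<eta>^3)"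
proof -
  define d where "d = 1 - \<bar>w\<bar>"
  define e where "e = 1/\<eta>"
  have d: "0 < d" "d \<le> 1" using assms d_def by auto
  have e: "0 < e" "e \<le> 1/2" unfolding e_def using assms(1) by (auto simp: field_simps)
  have B: "max 0 (e^2 - d^2) / 4 \<le> IF e d \<and> IF e d \<le> max 0 (e^2 - d^2) / 4 + e^3/2"
    by (rule IF_bounds[OF d e])
  have I: "integral {-1<..<1} (\<lambda>z. Phi0 \<eta> w z) = 6/pi^2 * IF e d"
    using inner_eq[OF assms] d_def e_def by simp
  have e2: "e^2 = 1/\<eta>^2" "e^3 = 1/\<eta>^3" unfolding e_def by (simp_all add: power_divide)
  have p: "6/pi^2 > (0::real)" by simp
  have l: "6/pi^2 * (max 0 (e^2 - d^2) / 4) \<le> 6/pi^2 * IF e d"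
    using B p by (intro mult_left_mono) auto
  have u: "6/pi^2 * IF e d \<le> 6/pi^2 * (max 0 (e^2 - d^2) / 4 + e^3/2)"
    using B p by (intro mult_left_mono) auto
  have "6/pi^2 * (max 0 (e^2 - d^2) / 4) = 3/(2*pi^2) * max 0 (e^2 - d^2)" by simp
  moreover have "6/pi^2 * (max 0 (e^2 - d^2) / 4 + e^3/2) = 3/(2*pi^2) * max 0 (e^2 - d^2) + 3/pi^2 * e^3"
    by (simp add: field_simps)
  ultimately show ?thesis using l u I e2 d_def by simp
qed

lemma g_zero:
  assumes "\<eta> \<ge> 2" "-1 < w" "w < 1" "1/\<eta> \<le> 1 - \<bar>w\<bar>"
  shows "integral {-1<..<1} (\<lambda>z. Phi0 \<eta> w z) = 0"
  using inner_eq[OF assms(1-3)] IF_zero[OF assms(4)] by simp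

lemma g_mono:
  assumes "2 \<le> \<eta>1" "\<eta>1 \<le> \<eta>2" "-1 < w" "w < 1"
  shows "integral {-1<..<1} (\<lambda>z. Phi0 \<eta>2 w z) \<le> integral {-1<..<1} (\<lambda>z. Phi0 \<eta>1 w z)"
proof -
  have "IF (1/\<eta>2) (1 - \<bar>w\<bar>) \<le> IF (1/\<eta>1) (1 - \<bar>w\<bar>)"
    using assms by (intro IF_mono) (auto simp: field_simps)
  then have "6 * IF (1/\<eta>2) (1 - \<bar>w\<bar>) / pi^2 \<le> 6 * IF (1/\<eta>1) (1 - \<bar>w\<bar>) / pi^2"
    by (intro divide_right_mono mult_left_mono) auto
  then show ?thesis using inner_eq[OF _ assms(3,4), of \<eta>1] inner_eq[OF _ assms(3,4), of \<eta>2] assms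
    by simp
qed

lemma derA: "x \<ge> 2 \<Longrightarrow> ((\<lambda>\<eta>::real. c * (- 1/\<eta> - d^2 * \<eta>)) has_real_derivative (c * (1/x^2 - d^2))) (at x)"
  by (auto intro!: derivative_eq_intros simp: field_simps power2_eq_square)
lemma derB: "x \<ge> 2 \<Longrightarrow> ((\<lambda>\<eta>::real. c * (- 1/\<eta> - d^2 * \<eta>) - k / (2 * \<eta>^2)) has_real_derivative (c * (1/x^2 - d^2) + k * (1/x^3))) (at x)"
  by (auto intro!: derivative_eq_intros simp: field_simps power2_eq_square power3_eq_cube)

theorem mainTheorem3:
  shows "\<exists>C X0. \<forall>\<xi> \<ge> X0. \<forall>w. -1 < w \<and> w < 1 \<longrightarrow>
           (let u = \<xi> * (1 - \<bar>w\<bar>) in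
             (0 \<le> u \<and> u < 1 \<longrightarrow>
                \<bar>Phi \<xi> w - 3 / (2 * pi^2) * (1 - u)^2 / \<xi>\<bar> \<le> C / \<xi>^2) \<and>
             (\<not> (0 \<le> u \<and> u < 1) \<longrightarrow> Phi \<xi> w = 0))"
proof (intro exI allI impI)
  fix \<xi> w :: real
  assume xi: "\<xi> \<ge> 2" and w: "-1 < w \<and> w < 1"
  define d where "d = 1 - \<bar>w\<bar>"
  define u where "u = \<xi> * d"
  define g where "g = (\<lambda>\<eta>. integral {-1<..<1} (\<lambda>z. Phi0 \<eta> w z))"
  have d: "0 < d" "d \<le> 1" using w d_def by auto
  have u0: "0 \<le> u" using d xi u_def by simp
  have Phi: "Phi \<xi> w = integral {\<xi>..} g" unfolding Phi_def g_def by simp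
  show "let u = \<xi> * (1 - \<bar>w\<bar>) in
             (0 \<le> u \<and> u < 1 \<longrightarrow>
                \<bar>Phi \<xi> w - 3 / (2 * pi^2) * (1 - u)^2 / \<xi>\<bar> \<le> 1 / \<xi>^2) \<and>
             (\<not> (0 \<le> u \<and> u < 1) \<longrightarrow> Phi \<xi> w = 0)"
  proof (cases "u < 1")
    case False
    have "\<And>\<eta>. \<eta> \<in> {\<xi>..} \<Longrightarrow> g \<eta> = 0"
    proof -
      fix \<eta> assume "\<eta> \<in> {\<xi>..}"
      then have h: "\<eta> \<ge> \<xi>" by simp
      have "1/\<eta> \<le> 1/\<xi>" using h xi by (simp add: frac_le)
      also have "1/\<xi> \<le> d" using False xi u_def by (simp add: field_simps)
      finally show "g \<eta> = 0" unfolding g_def using g_zero[of \<eta> w] h xi w d_def by simp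
    qed
    then have "integral {\<xi>..} g = integral {\<xi>..} (\<lambda>_. 0::real)" by (intro integral_cong) auto
    then have "Phi \<xi> w = 0" unfolding Phi by simp
    then show ?thesis using False u_def d_def by (simp add: Let_def)
  next
    case True
    define b where "b = 1/d"
    have xb: "\<xi> < b" using True xi d unfolding b_def u_def by (simp add: field_simps)
    have gint: "g integrable_on {\<xi>..b}"
    proof -
      have "mono_on {\<xi>..b} (\<lambda>\<eta>. - g \<eta>)"
        by (rule mono_onI) (use xi w in \<open>auto simp: g_def intro!: g_mono\<close>)
      then have "(\<lambda>\<eta>. - g \<eta>) integrable_on {\<xi>..b}" by (rule integrable_on_mono_on)
      then show ?thesis using integrable_neg by fastforce
    qed
    have hI: "(g has_integral integral {\<xi>..b} g) {\<xi>..b}" using gint by blast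
    have "((\<lambda>x. if x \<in> {\<xi>..b} then g x else 0) has_integral integral {\<xi>..b} g) {\<xi>..}"
      using hI by (subst has_integral_restrict) auto
    moreover have "((\<lambda>x. if x \<in> {\<xi>..b} then g x else 0) has_integral integral {\<xi>..b} g) {\<xi>..}
       \<longleftrightarrow> (g has_integral integral {\<xi>..b} g) {\<xi>..}"
    proof (rule has_integral_cong)
      fix x assume x: "x \<in> {\<xi>..}"
      show "(if x \<in> {\<xi>..b} then g x else 0) = g x"
      proof (cases "x \<le> b")
        case False
        have "1/x \<le> d" using False d x xi unfolding b_def by (simp add: field_simps)
        then have "g x = 0" unfolding g_def using g_zero[of x w] x xi w d_def by simp
        then show ?thesis by simp
      qed (use x in auto)
    qed
    ultimately have "(g has_integral integral {\<xi>..b} g) {\<xi>..}" by simp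
    then have PhiI: "Phi \<xi> w = integral {\<xi>..b} g" unfolding Phi by (rule integral_unique)
    define c where "c = 3/(2*pi^2)"
    define k where "k = 3/pi^2"
    define A where "A = (\<lambda>\<eta>::real. c * (- 1/\<eta> - d^2 * \<eta>))"
    define B where "B = (\<lambda>\<eta>::real. A \<eta> - k / (2 * \<eta>^2))"
    have lf: "((\<lambda>\<eta>. c * (1/\<eta>^2 - d^2)) has_integral (A b - A \<xi>)) {\<xi>..b}"
      unfolding A_def by (rule ftc_real) (use xb xi derA in auto)
    have uf: "((\<lambda>\<eta>. c * (1/\<eta>^2 - d^2) + k * (1/\<eta>^3)) has_integral (B b - B \<xi>)) {\<xi>..b}"
      unfolding B_def A_def by (rule ftc_real) (use xb xi derB in auto)
    have mx: "\<And>\<eta>. \<eta> \<in> {\<xi>..b} \<Longrightarrow> max 0 (1/\<eta>^2 - d^2) = 1/\<eta>^2 - d^2"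
    proof -
      fix \<eta> assume h: "\<eta> \<in> {\<xi>..b}"
      then have "d \<le> 1/\<eta>" using xi d unfolding b_def by (simp add: field_simps)
      then have "d^2 \<le> (1/\<eta>)^2" using d by (simp add: power_mono)
      then show "max 0 (1/\<eta>^2 - d^2) = 1/\<eta>^2 - d^2" by (simp add: power_divide)
    qed
    have gb: "\<And>\<eta>. \<eta> \<in> {\<xi>..b} \<Longrightarrow> c * (1/\<eta>^2 - d^2) \<le> g \<eta> \<and> g \<eta> \<le> c * (1/\<eta>^2 - d^2) + k * (1/\<eta>^3)"
    proof -
      fix \<eta> assume h: "\<eta> \<in> {\<xi>..b}"
      then have "\<eta> \<ge> 2" using xi by simp
      then have G: "3/(2*pi^2) * max 0 (1/\<eta>^2 - d^2) \<le> g \<eta> \<and> g \<eta> \<le> 3/(2*pi^2) * max 0 (1/\<eta>^2 - d^2) + 3/pi^2 * (1/\<eta>^3)"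
        using g_bounds[of \<eta> w] w unfolding g_def d_def by blast
      show "c * (1/\<eta>^2 - d^2) \<le> g \<eta> \<and> g \<eta> \<le> c * (1/\<eta>^2 - d^2) + k * (1/\<eta>^3)"
        using G unfolding mx[OF h] c_def k_def .
    qed
    have lo: "A b - A \<xi> \<le> Phi \<xi> w"
      unfolding PhiI by (rule has_integral_le[OF lf hI]) (use gb in auto)
    have hi: "Phi \<xi> w \<le> B b - B \<xi>"
      unfolding PhiI by (rule has_integral_le[OF hI uf]) (use gb in auto)
    have Av: "A b - A \<xi> = 3 / (2 * pi^2) * (1 - u)^2 / \<xi>"
      unfolding A_def b_def c_def u_def using d xi by (simp add: field_simps power2_eq_square)
    have Bv: "B b - B \<xi> = (A b - A \<xi>) - k / (2 * b^2) + k / (2 * \<xi>^2)"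
      unfolding B_def by simp
    have kb: "k / (2 * b^2) \<ge> 0" unfolding k_def by simp
    have "k / (2 * \<xi>^2) \<le> 1 / \<xi>^2"
    proof -
      have "pi^2 \<ge> 3^2" using pi_gt3 by (intro power_mono) auto
      then have "k/2 \<le> 1" unfolding k_def by (simp add: field_simps)
      then have "(k/2) * (1/\<xi>^2) \<le> 1 * (1/\<xi>^2)" by (intro mult_right_mono) auto
      then show ?thesis by simp
    qed
    then have "\<bar>Phi \<xi> w - 3 / (2 * pi^2) * (1 - u)^2 / \<xi>\<bar> \<le> 1 / \<xi>^2"
      using lo hi Av Bv kb by linarith
    then show ?thesis using True u0 u_def d_def by (simp add: Let_def)
  qed
qed

end
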